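(* Let $N\ge 1$, let $\mathbf{a}_1,\dots,\mathbf{a}_N\in\mathbb{R}^3$ (base station positions, $\mathbf{a}_i=(a_i,b_i,c_i)$) and $\mathbf{x}_G\in\mathbb{R}^3$, and set $d_i=\|\mathbf{x}_G-\mathbf{a}_i\|$. Define $$F_2(\mathbf{x})=\frac14\sum_{i=1}^N\bigl(\|\mathbf{x}-\mathbf{a}_i\|^2-d_i^2\bigr)^2,\qquad F_{L2}(\mathbf{x},\lambda)=\frac14\sum_{i=1}^N\bigl(\|\mathbf{x}-\mathbf{a}_i\|^2+\lambda^2-d_i^2\bigr)^2$$ for $\mathbf{x}\in\mathbb{R}^3$, $\lambda\in\mathbb{R}$. Assume $\mathbf{x}_G$ is the unique global minimizer of $F_2$, and let $\mathbf{x}_L\ne\mathbf{x}_G$ be a local minimizer of $F_2$ at which $\nabla F_2(\mathbf{x}_L)=0$ and the second partial derivatives $\partial^2F_2/\partial x^2,\ \partial^2F_2/\partial y^2,\ \partial^2F_2/\partial z^2$ are positive. Then $(\mathbf{x}_L,0)$ is a saddle point of $F_{L2}$: namely $\nabla_{\mathbf{x}}F_{L2}(\mathbf{x}_L,0)=0$, $\frac{\partial F_{L2}}{\partial\lambda}(\mathbf{x}_L,0)=0$, $\frac{\partial^2F_{L2}}{\partial x\,\partial\lambda}(\mathbf{x}_L,0)=\frac{\partial^2F_{L2}}{\partial y\,\partial\lambda}(\mathbf{x}_L,0)=\frac{\partial^2F_{L2}}{\partial z\,\partial\lambda}(\mathbf{x}_L,0)=0$, the second derivatives of $F_{L2}$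 in $x,y,z$ at $(\mathbf{x}_L,0)$ are positive, and $\frac{\partial^2F_{L2}}{\partial\lambda^2}(\mathbf{x}_L,0)<0$.
   Context: This models Time of Arrival localization with exact distance measurements $d_i$ from known base stations $\mathbf{a}_i$ to an object at $\mathbf{x}_G$; $F_{L2}$ is the objective $F_2$ augmented by an additional variable $\lambda$. Note $F_{L2}(\mathbf{x},0)=F_2(\mathbf{x})$ and $F_2(\mathbf{x}_G)=0$. *)

theory Defs
  imports "HOL-Analysis.Analysis"
begin

definition F2 :: "nat \<Rightarrow> (nat \<Rightarrow> real^3) \<Rightarrow> real^3 \<Rightarrow> real^3 \<Rightarrow> real" where
  "F2 N a xG x = (1/4) * (\<Sum>i<N. ((norm (x - a i))\<^sup>2 - (norm (xG - a i))\<^sup>2)\<^sup>2)"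

definition FL2 :: "nat \<Rightarrow> (nat \<Rightarrow> real^3) \<Rightarrow> real^3 \<Rightarrow> real^3 \<Rightarrow> real \<Rightarrow> real" where
  "FL2 N a xG x lam = (1/4) * (\<Sum>i<N. ((norm (x - a i))\<^sup>2 + lam\<^sup>2 - (norm (xG - a i))\<^sup>2)\<^sup>2)"

definition pd :: "3 \<Rightarrow> (real^3 \<Rightarrow> real) \<Rightarrow> real^3 \<Rightarrow> real" where
  "pd k f p = deriv (\<lambda>t. f (p + t *\<^sub>R axis k 1)) 0"

definition pdx :: "3 \<Rightarrow> (real^3 \<Rightarrow> real \<Rightarrow> real) \<Rightarrow> real^3 \<Rightarrow> real \<Rightarrow> real" where
  "pdx k g p l = deriv (\<lambda>t. g (p + t *\<^sub>R axis k 1) l) 0"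

definition pdl :: "(real^3 \<Rightarrow> real \<Rightarrow> real) \<Rightarrow> real^3 \<Rightarrow> real \<Rightarrow> real" where
  "pdl g p l = deriv (\<lambda>t. g p (l + t)) 0"

definition local_minimizer :: "(real^3 \<Rightarrow> real) \<Rightarrow> real^3 \<Rightarrow> bool" where
  "local_minimizer f p \<longleftrightarrow> (\<exists>e>0. \<forall>x\<in>ball p e. f p \<le> f x)"

end

theory Submission
  imports Defs
begin

lemma norm_shift_sq:
  fixes p q :: "real^3"
  shows "(norm (p + t *\<^sub>R axis k 1 - q))\<^sup>2 = (norm (p - q))\<^sup>2 + 2*t*((p - q)$k) + t^2"
proof -
  define w where "w = p - q"
  have e: "p + t *\<^sub>R axis k 1 - q = w + t *\<^sub>R axis k 1" by (simp add: w_def)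
  have "inner (w + t *\<^sub>R axis k 1) (w + t *\<^sub>R axis k 1) = inner w w + 2*t*(w$k) + t^2"
    by (simp add: inner_add_left inner_add_right inner_axis inner_axis_axis inner_commute power2_eq_square algebra_simps)
  then show ?thesis unfolding e w_def[symmetric] by (simp add: power2_norm_eq_inner)
qed

lemma pdx_FL2:
  "pdx k (FL2 N a xG) p l = (\<Sum>i<N. ((norm (p - a i))\<^sup>2 + l\<^sup>2 - (norm (xG - a i))\<^sup>2) * ((p - a i)$k))"
proof -
  define c where "c i = (norm (p - a i))\<^sup>2 + l\<^sup>2 - (norm (xG - a i))\<^sup>2" for i
  define vv where "vv i = (p - a i)$k" for i
  have eq: "(\<lambda>t. FL2 N a xG (p + t *\<^sub>R axis k 1) l) =
     (\<lambda>t. (1/4) * (\<Sum>i<N. (c i + 2*t* vv i + t^2)\<^sup>2))"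
    by (rule ext) (simp add: FL2_def norm_shift_sq c_def vv_def algebra_simps)
  have "((\<lambda>t. (1/4) * (\<Sum>i<N. (c i + 2*t* vv i + t^2)\<^sup>2)) has_real_derivative
     (1/4) * (\<Sum>i<N. 2 * (c i + 2*0* vv i + 0^2) * (2 * vv i + 2 * 0))) (at 0)"
    by (auto intro!: derivative_eq_intros sum.cong simp: algebra_simps)
  then have D: "deriv (\<lambda>t. FL2 N a xG (p + t *\<^sub>R axis k 1) l) 0 = (1/4) * (\<Sum>i<N. 2 * (c i + 2*0* vv i + 0^2) * (2 * vv i + 2 * 0))"
    unfolding eq by (rule DERIV_imp_deriv)
  have "(1/4) * (\<Sum>i<N. 2 * (c i + 2*0* vv i + 0^2) * (2 * vv i + 2 * 0)) = (\<Sum>i<N. c i * vv i)"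
    unfolding sum_distrib_left by (rule sum.cong) auto
  with D have "deriv (\<lambda>t. FL2 N a xG (p + t *\<^sub>R axis k 1) l) 0 = (\<Sum>i<N. c i * vv i)" by simp
  then show ?thesis by (simp add: pdx_def c_def vv_def)
qed

lemma pdl_FL2:
  "pdl (FL2 N a xG) p l = l * (\<Sum>i<N. (norm (p - a i))\<^sup>2 + l\<^sup>2 - (norm (xG - a i))\<^sup>2)"
proof -
  define c where "c i = (norm (p - a i))\<^sup>2 - (norm (xG - a i))\<^sup>2" for i
  have eq: "(\<lambda>t. FL2 N a xG p (l + t)) = (\<lambda>t. (1/4) * (\<Sum>i<N. (c i + (l+t)^2)\<^sup>2))"
    by (rule ext) (simp add: FL2_def c_def algebra_simps)
  have "((\<lambda>t. (1/4) * (\<Sum>i<N. (c i + (l+t)^2)\<^sup>2)) has_real_derivative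
     (1/4) * (\<Sum>i<N. 2 * (c i + (l+0)^2) * (2 * (l+0) * 1))) (at 0)"
    by (auto intro!: derivative_eq_intros sum.cong simp: algebra_simps)
  then have D: "deriv (\<lambda>t. FL2 N a xG p (l + t)) 0 = (1/4) * (\<Sum>i<N. 2 * (c i + (l+0)^2) * (2 * (l+0) * 1))"
    unfolding eq by (rule DERIV_imp_deriv)
  have "(1/4) * (\<Sum>i<N. 2 * (c i + (l+0)^2) * (2 * (l+0) * 1)) = l * (\<Sum>i<N. c i + l\<^sup>2)"
    unfolding sum_distrib_left by (rule sum.cong) (auto simp: algebra_simps)
  with D have "deriv (\<lambda>t. FL2 N a xG p (l + t)) 0 = l * (\<Sum>i<N. c i + l\<^sup>2)" by simp
  then show ?thesis by (simp add: pdl_def c_def algebra_simps)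
qed

lemma FL2_0: "FL2 N a xG x 0 = F2 N a xG x"
  by (simp add: FL2_def F2_def)

lemma pdx_pd: "pdx k (FL2 N a xG) p 0 = pd k (F2 N a xG) p"
  by (simp add: pdx_def pd_def FL2_0)

lemma key_ident:
  fixes xL xG q :: "real^3"
  shows "2 * inner (xL - q) (xL - xG) = ((norm (xL - q))\<^sup>2 - (norm (xG - q))\<^sup>2) + (norm (xL - xG))\<^sup>2"
proof -
  define u where "u = xL - xG"
  define w where "w = xG - q"
  have e: "xL - q = u + w" by (simp add: u_def w_def)
  show ?thesis unfolding e u_def[symmetric] w_def[symmetric]
    by (simp add: power2_norm_eq_inner inner_add_left inner_add_right inner_commute algebra_simps)
qed

theorem mainTheorem1:
  fixes N :: nat and a :: "nat \<Rightarrow> real^3" and xG xL :: "real^3"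
  assumes "N \<ge> 1"
    and uniq: "\<forall>x. x \<noteq> xG \<longrightarrow> F2 N a xG xG < F2 N a xG x"
    and "xL \<noteq> xG"
    and "local_minimizer (F2 N a xG) xL"
    and "\<forall>k. pd k (F2 N a xG) xL = 0"
    and "\<forall>k. pd k (pd k (F2 N a xG)) xL > 0"
  shows "(\<forall>k. pdx k (FL2 N a xG) xL 0 = 0)
    \<and> pdl (FL2 N a xG) xL 0 = 0
    \<and> (\<forall>k. pdl (pdx k (FL2 N a xG)) xL 0 = 0)
    \<and> (\<forall>k. pdx k (pdx k (FL2 N a xG)) xL 0 > 0)
    \<and> pdl (pdl (FL2 N a xG)) xL 0 < 0"
proof -
  define r where "r i = (norm (xL - a i))\<^sup>2 - (norm (xG - a i))\<^sup>2" for i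
  define u where "u = xL - xG"
  have c1: "\<forall>k. pdx k (FL2 N a xG) xL 0 = 0" using assms(5) by (simp add: pdx_pd)
  have c2: "pdl (FL2 N a xG) xL 0 = 0" by (simp add: pdl_FL2)
  have c3: "pdl (pdx k (FL2 N a xG)) xL 0 = 0" for k
  proof -
    have "((\<lambda>t. \<Sum>i<N. ((norm (xL - a i))\<^sup>2 + (0+t)\<^sup>2 - (norm (xG - a i))\<^sup>2) * ((xL - a i)$k))
       has_real_derivative (\<Sum>i<N. (2 * (0+0) * 1) * ((xL - a i)$k))) (at 0)"
      by (auto intro!: derivative_eq_intros)
    then have "deriv (\<lambda>t. \<Sum>i<N. ((norm (xL - a i))\<^sup>2 + (0+t)\<^sup>2 - (norm (xG - a i))\<^sup>2) * ((xL - a i)$k)) 0 = 0"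
      by (simp add: DERIV_imp_deriv)
    then show ?thesis by (simp add: pdl_def pdx_FL2)
  qed
  have c4: "pdx k (pdx k (FL2 N a xG)) xL 0 > 0" for k
  proof -
    have "pdx k (pdx k (FL2 N a xG)) xL 0 = pd k (pd k (F2 N a xG)) xL"
      by (simp add: pdx_def[of k "pdx k (FL2 N a xG)"] pdx_pd pd_def[of k "pd k (F2 N a xG)"])
    then show ?thesis using assms(6) by simp
  qed
  have S: "(\<Sum>i<N. r i) < 0"
  proof -
    have g: "(\<Sum>i<N. r i * ((xL - a i)$k)) = 0" for k
      using c1 by (simp add: pdx_FL2 r_def)
    have gv: "(\<Sum>i<N. r i *\<^sub>R (xL - a i)) = 0"
      using g by (simp add: vec_eq_iff)
    have "0 = inner (\<Sum>i<N. r i *\<^sub>R (xL - a i)) u" by (simp add: gv)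
    also have "\<dots> = (\<Sum>i<N. r i * inner (xL - a i) u)" by (simp add: inner_sum_left)
    also have "\<dots> = (\<Sum>i<N. r i * ((r i + (norm u)\<^sup>2) / 2))"
    proof (rule sum.cong)
      fix i
      have "2 * inner (xL - a i) u = r i + (norm u)\<^sup>2"
        unfolding u_def r_def by (rule key_ident)
      then show "r i * inner (xL - a i) u = r i * ((r i + (norm u)\<^sup>2) / 2)" by simp
    qed simp
    also have "\<dots> = ((\<Sum>i<N. (r i)\<^sup>2) + (norm u)\<^sup>2 * (\<Sum>i<N. r i)) / 2"
      by (simp add: sum_divide_distrib[symmetric] sum_distrib_left sum.distrib[symmetric] algebra_simps power2_eq_square)
    finally have E: "(\<Sum>i<N. (r i)\<^sup>2) + (norm u)\<^sup>2 * (\<Sum>i<N. r i) = 0" by simp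
    have "F2 N a xG xG < F2 N a xG xL" using uniq assms(3) by auto
    moreover have "F2 N a xG xG = 0" by (simp add: F2_def)
    ultimately have "(\<Sum>i<N. (r i)\<^sup>2) > 0" by (simp add: F2_def r_def)
    moreover have "(norm u)\<^sup>2 > 0" using assms(3) by (simp add: u_def)
    ultimately show ?thesis using E
      by (smt (verit) mult_nonneg_nonneg)
  qed
  have c5: "pdl (pdl (FL2 N a xG)) xL 0 = (\<Sum>i<N. r i)"
  proof -
    have "((\<lambda>t. (0+t) * (\<Sum>i<N. (norm (xL - a i))\<^sup>2 + (0+t)\<^sup>2 - (norm (xG - a i))\<^sup>2))
       has_real_derivative (1 * (\<Sum>i<N. (norm (xL - a i))\<^sup>2 + (0+0)\<^sup>2 - (norm (xG - a i))\<^sup>2)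
          + (0+0) * (\<Sum>i<N. 2 * (0+0) * 1))) (at 0)"
      by (auto intro!: derivative_eq_intros)
    then have "deriv (\<lambda>t. (0+t) * (\<Sum>i<N. (norm (xL - a i))\<^sup>2 + (0+t)\<^sup>2 - (norm (xG - a i))\<^sup>2)) 0
        = (\<Sum>i<N. r i)"
      by (simp add: DERIV_imp_deriv r_def)
    then show ?thesis by (simp add: pdl_def[of "pdl (FL2 N a xG)"] pdl_FL2)
  qed
  show ?thesis using c1 c2 c3 c4 c5 S by simp
qed

end
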